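(* For all nonnegative integers $A$, $k$ and $t$, $$k^t \left\{ {A \atop k} \right\} = \sum_{\substack{u,v,w \in \mathbb{N}_0 \\ u+v+w = t}} \binom{t}{u} (-1)^{v} \left\{ {v+w \atop v} \right\} \left\{ {A+u \atop k-v} \right\}.$$
   Context: $\mathbb{N}_0$ denotes the nonnegative integers. $\left\{ {n \atop m} \right\}$ is the Stirling number of the second kind (the number of partitions of an $n$-element set into $m$ nonempty blocks), with $\left\{ {0 \atop 0} \right\} = 1$, $\left\{ {n \atop 0} \right\} = 0$ for $n > 0$, and $\left\{ {n \atop m} \right\} = 0$ whenever $m < 0$ or $m > n$. The convention $0^0 = 1$ is used. *)

theory Defs
  imports "HOL-Combinatorics.Stirling"
begin

definition StirlingZ :: "nat \<Rightarrow> int \<Rightarrow> nat" where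
  "StirlingZ n m = (if m < 0 then 0 else Stirling n (nat m))"

end

theory Submission
  imports Defs
begin

definition s :: "nat \<Rightarrow> int \<Rightarrow> int" where
  "s n m = int (StirlingZ n m)"

lemma s_rec: "s (Suc A) m = m * s A m + s A (m - 1)"
proof (cases "m < 0")
  case True then show ?thesis by (simp add: s_def StirlingZ_def)
next
  case False
  show ?thesis
  proof (cases "m = 0")
    case True then show ?thesis by (simp add: s_def StirlingZ_def)
  next
    case F2: False
    then obtain j where j: "m = int (Suc j)" using False
      by (metis int_ops(1) nat_less_le nat_0_le not0_implies_Suc zero_less_nat_eq linorder_not_less)
    have "nat m = Suc j" "nat (m - 1) = j" using j by auto
    then show ?thesis using j by (simp add: s_def StirlingZ_def algebra_simps)
  qed
qed

definition L :: "nat \<Rightarrow> nat \<Rightarrow> int \<Rightarrow> int" where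
  "L n A k = (\<Sum>v\<le>n. (-1)^v * int (Stirling n v) * s A (k - int v))"

fun Q :: "nat \<Rightarrow> nat \<Rightarrow> int \<Rightarrow> int" where
  "Q 0 A k = s A k"
| "Q (Suc n) A k = k * Q n A k - Q n (Suc A) k"

lemma L_Q: "L n A k = Q n A k"
proof (induction n arbitrary: A k)
  case 0 then show ?case by (simp add: L_def)
next
  case (Suc n)
  have "Q (Suc n) A k = k * L n A k - L n (Suc A) k" by (simp add: Suc)
  also have "\<dots> = (\<Sum>v\<le>n. (-1)^v * int (Stirling n v) * (int v * s A (k - int v) - s A (k - int v - 1)))"
    unfolding L_def s_rec sum_distrib_left sum_subtractf[symmetric]
    by (rule sum.cong) (auto simp: algebra_simps)
  also have "\<dots> = (\<Sum>v\<le>n. (-1)^v * (int v * int (Stirling n v)) * s A (k - int v))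
      + (\<Sum>v\<le>n. (-1)^(Suc v) * int (Stirling n v) * s A (k - int (Suc v)))"
    unfolding sum.distrib[symmetric]
    by (rule sum.cong) (auto simp: algebra_simps)
  also have "(\<Sum>v\<le>n. (-1)^(Suc v) * int (Stirling n v) * s A (k - int (Suc v)))
      = (\<Sum>v\<le>Suc n. (-1)^v * (if v = 0 then 0 else int (Stirling n (v - 1))) * s A (k - int v))"
    by (subst sum.atMost_Suc_shift) simp
  also have "(\<Sum>v\<le>n. (-1)^v * (int v * int (Stirling n v)) * s A (k - int v))
      = (\<Sum>v\<le>Suc n. (-1)^v * (int v * int (Stirling n v)) * s A (k - int v))"
    by simp
  also have "\<dots> + (\<Sum>v\<le>Suc n. (-1)^v * (if v = 0 then 0 else int (Stirling n (v - 1))) * s A (k - int v))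
      = L (Suc n) A k"
    unfolding L_def sum.distrib[symmetric]
  proof (rule sum.cong)
    fix v assume "v \<in> {..Suc n}"
    show "(-1)^v * (int v * int (Stirling n v)) * s A (k - int v) +
          (-1)^v * (if v = 0 then 0 else int (Stirling n (v - 1))) * s A (k - int v) =
          (-1)^v * int (Stirling (Suc n) v) * s A (k - int v)"
    proof (cases v)
      case 0 then show ?thesis by simp
    next
      case (Suc j) then show ?thesis by (simp add: algebra_simps)
    qed
  qed simp
  finally show ?case by simp
qed

definition R :: "nat \<Rightarrow> nat \<Rightarrow> int \<Rightarrow> int" where
  "R t A k = (\<Sum>u\<le>t. int (t choose u) * Q (t - u) (A + u) k)"

lemma R_Suc: "R (Suc t) A k = k * R t A k"
proof -
  have a: "(\<Sum>u\<le>t. int (t choose u) * Q (Suc t - u) (A + u) k)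
      = k * R t A k - (\<Sum>u\<le>t. int (t choose u) * Q (t - u) (Suc (A + u)) k)"
    unfolding R_def sum_distrib_left sum_subtractf[symmetric]
    by (rule sum.cong) (auto simp: Suc_diff_le algebra_simps)
  have b: "(\<Sum>u\<le>t. int (t choose u) * Q (Suc t - u) (A + u) k)
      = Q (Suc t) A k + (\<Sum>u\<le>t. int (t choose Suc u) * Q (t - u) (A + Suc u) k)"
  proof -
    have "(\<Sum>u\<le>Suc t. int (t choose u) * Q (Suc t - u) (A + u) k)
        = Q (Suc t) A k + (\<Sum>u\<le>t. int (t choose Suc u) * Q (t - u) (A + Suc u) k)"
      by (subst sum.atMost_Suc_shift) simp
    moreover have "(t choose Suc t) = 0" by (simp add: binomial_eq_0)
    ultimately show ?thesis by (simp del: Q.simps)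
  qed
  have "R (Suc t) A k = Q (Suc t) A k + (\<Sum>u\<le>t. int (Suc t choose Suc u) * Q (t - u) (A + Suc u) k)"
    unfolding R_def by (subst sum.atMost_Suc_shift) simp
  also have "\<dots> = Q (Suc t) A k + (\<Sum>u\<le>t. int (t choose Suc u) * Q (t - u) (A + Suc u) k)
       + (\<Sum>u\<le>t. int (t choose u) * Q (t - u) (Suc (A + u)) k)"
    by (simp add: sum.distrib[symmetric] algebra_simps)
  also have "\<dots> = k * R t A k" using a b by simp
  finally show ?thesis .
qed

lemma R_closed: "R t A k = k ^ t * s A k"
proof (induction t)
  case 0 then show ?case by (simp add: R_def)
next
  case (Suc t) then show ?case by (simp only: R_Suc) simp
qed

theorem lemma1:
  fixes A k t :: nat
  shows "int (k ^ t * Stirling A k) =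
    (\<Sum>(u, v, w) \<in> {(u, v, w). u + v + w = t}.
       int (t choose u) * (-1) ^ v * int (Stirling (v + w) v)
       * int (StirlingZ (A + u) (int k - int v)))"
proof -
  let ?f = "\<lambda>(u, v, w). int (t choose u) * (-1) ^ v * int (Stirling (v + w) v)
       * int (StirlingZ (A + u) (int k - int v))"
  let ?g = "\<lambda>(u, v). (u, v, t - u - v)"
  have set: "{(u, v, w). u + v + w = t} = ?g ` (SIGMA u:{..t}. {..t-u})"
    by (auto simp: image_iff)
  have inj: "inj_on ?g (SIGMA u:{..t}. {..t-u})"
    by (auto simp: inj_on_def)
  have "(\<Sum>(u, v, w) \<in> {(u, v, w). u + v + w = t}. ?f (u, v, w))
      = (\<Sum>x\<in>(SIGMA u:{..t}. {..t-u}). ?f (?g x))"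
    unfolding set by (subst sum.reindex[OF inj]) (simp add: comp_def)
  also have "\<dots> = (\<Sum>u\<le>t. \<Sum>v\<le>t-u. ?f (?g (u, v)))"
    by (subst sum.Sigma) (auto simp: split_def)
  also have "\<dots> = (\<Sum>u\<le>t. int (t choose u) * L (t - u) (A + u) (int k))"
    unfolding L_def sum_distrib_left
    by (intro sum.cong refl) (auto simp: s_def algebra_simps)
  also have "\<dots> = R t A (int k)" by (simp add: R_def L_Q)
  also have "\<dots> = int (k ^ t * Stirling A k)"
    by (simp add: R_closed s_def StirlingZ_def)
  finally show ?thesis by simp
qed

end
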